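(* Let $\mathscr{T}$ be a connected spanning set of pure states in a finite-dimensional Hilbert space $\mathcal{H}$. Then any maximal connected linearly independent set contained in $\mathscr{T}$ is a connected basis of $\mathcal{H}$.
   Context: The transition graph of a set $\mathscr{T}=\{|\psi_j\rangle\}$ of pure states has vertices the states, with two distinct vertices adjacent iff their inner product is nonzero; $\mathscr{T}$ is connected if this graph is connected. A connected spanning set is a connected set spanning $\mathcal{H}$; a connected linearly independent set (CLIS) is a connected, linearly independent set; a connected basis is a CLIS spanning $\mathcal{H}$. A CLIS contained in $\mathscr{T}$ is maximal if it is not properly contained in any other CLIS contained in $\mathscr{T}$. *)

theory Defs
  imports "HOL-Analysis.Analysis"
begin

text \<open>The finite-dimensional Hilbert space is modelled as complex^'n with 'n a finite type,
  with the standard inner product (conjugate-linear in the first argument).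
  Linear (in)dependence and span are over the complex scalars, via the library
  interpretation vec of vector_space for (*s).\<close>

definition cinner :: "complex ^ 'n \<Rightarrow> complex ^ 'n \<Rightarrow> complex" where
  "cinner x y = (\<Sum>i\<in>UNIV. cnj (x $ i) * y $ i)"

definition pure_state :: "complex ^ 'n \<Rightarrow> bool" where
  "pure_state x \<longleftrightarrow> cinner x x = 1"

definition transition_edges :: "(complex ^ 'n) set \<Rightarrow> ((complex ^ 'n) \<times> (complex ^ 'n)) set" where
  "transition_edges S = {(x, y). x \<in> S \<and> y \<in> S \<and> x \<noteq> y \<and> cinner x y \<noteq> 0}"

definition connected_set :: "(complex ^ 'n) set \<Rightarrow> bool" where
  "connected_set S \<longleftrightarrow> (\<forall>x\<in>S. \<forall>y\<in>S. (x, y) \<in> (transition_edges S)\<^sup>*)"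

definition connected_spanning_set :: "(complex ^ 'n) set \<Rightarrow> bool" where
  "connected_spanning_set S \<longleftrightarrow> connected_set S \<and> vec.span S = UNIV"

definition CLIS :: "(complex ^ 'n) set \<Rightarrow> bool" where
  "CLIS S \<longleftrightarrow> connected_set S \<and> \<not> vec.dependent S"

definition connected_basis :: "(complex ^ 'n) set \<Rightarrow> bool" where
  "connected_basis S \<longleftrightarrow> CLIS S \<and> vec.span S = UNIV"

definition maximal_CLIS_in :: "(complex ^ 'n) set \<Rightarrow> (complex ^ 'n) set \<Rightarrow> bool" where
  "maximal_CLIS_in T S \<longleftrightarrow> S \<subseteq> T \<and> CLIS S \<and> \<not> (\<exists>S'. S' \<subseteq> T \<and> CLIS S' \<and> S \<subset> S')"

end

theory Submission
  imports Defs
begin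

lemma cinner_cnj: "cinner y x = cnj (cinner x y)"
  unfolding cinner_def by (simp add: mult.commute)

lemma cinner_self0: "cinner 0 x = 0"
  unfolding cinner_def by simp

lemma orth_subspace: "vec.subspace {v. cinner v t = 0}"
  unfolding vec.subspace_def cinner_def
  by (auto simp: distrib_right sum.distrib sum_distrib_left[symmetric] mult.assoc)

lemma edges_mono: "A \<subseteq> B \<Longrightarrow> transition_edges A \<subseteq> transition_edges B"
  unfolding transition_edges_def by auto

theorem lemma4:
  fixes T S :: "(complex ^ 'n) set"
  assumes "\<forall>x\<in>T. pure_state x"
    and "connected_spanning_set T"
    and "maximal_CLIS_in T S"
  shows "connected_basis S"
proof -
  have ST: "S \<subseteq> T" and cS: "CLIS S" and mx: "\<And>S'. S' \<subseteq> T \<Longrightarrow> CLIS S' \<Longrightarrow> \<not> S \<subset> S'"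
    using assms(3) unfolding maximal_CLIS_in_def by auto
  have conT: "connected_set T" and spT: "vec.span T = UNIV"
    using assms(2) unfolding connected_spanning_set_def by auto
  have nz: "x \<noteq> 0" if "x \<in> T" for x
    using assms(1) that unfolding pure_state_def by (auto simp: cinner_self0)
  have "T \<noteq> {}"
  proof
    assume "T = {}"
    then have "(1::complex^'n) \<in> {0}" using spT by auto
    then show False by (simp add: vec_eq_iff)
  qed
  then obtain t1 where t1: "t1 \<in> T" by auto
  have "S \<noteq> {}"
  proof
    assume "S = {}"
    have "CLIS {t1}"
      unfolding CLIS_def connected_set_def using nz[OF t1]
      by (auto simp: vec.dependent_single)
    then show False using mx[of "{t1}"] t1 \<open>S = {}\<close> by auto
  qed
  then obtain s0 where s0: "s0 \<in> S" by auto
  have orth: "cinner s t = 0" if "t \<in> T" "t \<notin> vec.span S" "s \<in> S" for s t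
  proof (rule ccontr)
    assume ne: "cinner s t \<noteq> 0"
    have tS: "t \<notin> S" using that(2) vec.span_superset by auto
    have ind: "\<not> vec.dependent (insert t S)"
      using cS that(2) unfolding CLIS_def by (simp add: vec.independent_insert)
    let ?E = "transition_edges (insert t S)"
    have sub: "transition_edges S \<subseteq> ?E" by (rule edges_mono) auto
    have e1: "(s, t) \<in> ?E" using ne that tS unfolding transition_edges_def by auto
    have e2: "(t, s) \<in> ?E" using ne that tS unfolding transition_edges_def
      by (auto simp: cinner_cnj[of s t])
    have inS: "(x, y) \<in> ?E\<^sup>*" if "x \<in> S" "y \<in> S" for x y
      using cS that rtrancl_mono[OF sub] unfolding CLIS_def connected_set_def by blast
    have "connected_set (insert t S)"
      unfolding connected_set_def
    proof (intro ballI)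
      fix x y assume x: "x \<in> insert t S" and y: "y \<in> insert t S"
      have ts: "(t, z) \<in> ?E\<^sup>*" if "z \<in> S" for z
        using e2 inS[OF \<open>s \<in> S\<close> that] by (meson converse_rtrancl_into_rtrancl)
      have st: "(z, t) \<in> ?E\<^sup>*" if "z \<in> S" for z
        using e1 inS[OF that \<open>s \<in> S\<close>] by (meson rtrancl_into_rtrancl)
      show "(x, y) \<in> ?E\<^sup>*"
        using x y ts st inS by auto
    qed
    then have "CLIS (insert t S)" using ind unfolding CLIS_def by auto
    moreover have "insert t S \<subseteq> T" using ST that by auto
    moreover have "S \<subset> insert t S" using tS by auto
    ultimately show False using mx by blast
  qed
  have orth2: "cinner v t = 0" if "t \<in> T" "t \<notin> vec.span S" "v \<in> vec.span S" for v t
  proof -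
    have "vec.span S \<subseteq> {v. cinner v t = 0}"
      by (rule vec.span_minimal) (use orth[OF that(1,2)] orth_subspace in auto)
    then show ?thesis using that(3) by auto
  qed
  have reach: "y \<in> vec.span S" if "(x, y) \<in> (transition_edges T)\<^sup>*" "x \<in> vec.span S" for x y
    using that
  proof (induction rule: rtrancl_induct)
    case base then show ?case .
  next
    case (step y z)
    then show ?case using orth2[of z y] unfolding transition_edges_def by auto
  qed
  have "vec.span S = UNIV"
  proof (rule ccontr)
    assume "vec.span S \<noteq> UNIV"
    then have "\<not> T \<subseteq> vec.span S"
      using spT vec.span_minimal[of T "vec.span S"] vec.subspace_span by auto
    then obtain t where t: "t \<in> T" "t \<notin> vec.span S" by auto
    have "(s0, t) \<in> (transition_edges T)\<^sup>*"
      using conT s0 ST t unfolding connected_set_def by auto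
    then have "t \<in> vec.span S" using reach s0 vec.span_superset by blast
    then show False using t by auto
  qed
  then show ?thesis using cS unfolding connected_basis_def by auto
qed

end
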